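(* Let $\mathcal L$ be a list of Ferrers diagrams (partitions) such that no shape in the list is a subshape of another shape in the list. Let $N(n;\mathcal L)$ be the number of standard Young tableaux with $n$ cells which have a subtableau whose shape is in $\mathcal L$, and let $t_n$ be the number of all standard Young tableaux with $n$ cells. Then \[\lim_{n\to\infty}\frac{N(n;\mathcal L)}{t_n}=\sum_{\lambda\in\mathcal L}\frac{(f^{\lambda})^2}{|\lambda|!},\] where $|\lambda|$ is the number of cells of $\lambda$ and $f^\lambda$ is the number of standard Young tableaux of shape $\lambda$.
   Context: A standard Young tableau with $n$ cells is a Ferrers diagram of some partition of $n$ filled bijectively with $1,\dots,n$ so that entries increase along rows and down columns. For a standard Young tableau $U$ with $n$ cells and $k\le n$, the subtableau of $U$ in the letters $1,\dots,k$ is the tableau formed by the cells of $U$ containing $1,\dots,k$ (with those entries); a subtableau of $U$ means such a subtableau for some $k\le n$. A shape $\mu$ is a subshape of $\lambda$ if the Ferrers diagram of $\mu$ is contained in that of $\lambda$. *)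

theory Defs
  imports Complex_Main
begin

text \<open>A partition (shape) is a weakly decreasing list of positive integers (its row lengths).
  Its Ferrers diagram is the set of cells (row, column), 0-indexed.\<close>

definition is_partition :: "nat list \<Rightarrow> bool" where
  "is_partition lam \<longleftrightarrow> sorted_wrt (\<ge>) lam \<and> (\<forall>x\<in>set lam. 0 < x)"

definition ferrers :: "nat list \<Rightarrow> (nat \<times> nat) set" where
  "ferrers lam = {(i, j). i < length lam \<and> j < lam ! i}"

definition subshape :: "nat list \<Rightarrow> nat list \<Rightarrow> bool" where
  "subshape mu lam \<longleftrightarrow> ferrers mu \<subseteq> ferrers lam"

definition is_SYT :: "nat \<Rightarrow> (nat \<times> nat \<rightharpoonup> nat) \<Rightarrow> bool" where
  "is_SYT n T \<longleftrightarrow>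
     (\<exists>lam. is_partition lam \<and> dom T = ferrers lam) \<and>
     inj_on T (dom T) \<and> ran T = {1..n} \<and>
     (\<forall>i j. (i, Suc j) \<in> dom T \<longrightarrow> the (T (i, j)) < the (T (i, Suc j))) \<and>
     (\<forall>i j. (Suc i, j) \<in> dom T \<longrightarrow> the (T (i, j)) < the (T (Suc i, j)))"

definition subtableau :: "nat \<Rightarrow> (nat \<times> nat \<rightharpoonup> nat) \<Rightarrow> (nat \<times> nat \<rightharpoonup> nat)" where
  "subtableau k T = (\<lambda>c. case T c of None \<Rightarrow> None | Some v \<Rightarrow> if v \<le> k then Some v else None)"

definition num_SYT :: "nat \<Rightarrow> nat" where
  "num_SYT n = card {T. is_SYT n T}"

definition num_SYT_shape :: "nat list \<Rightarrow> nat" where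
  "num_SYT_shape lam = card {T. is_SYT (sum_list lam) T \<and> dom T = ferrers lam}"

definition N_avoid :: "nat \<Rightarrow> nat list list \<Rightarrow> nat" where
  "N_avoid n L = card {T. is_SYT n T \<and>
      (\<exists>k\<le>n. \<exists>lam\<in>set L. dom (subtableau k T) = ferrers lam)}"

end

theory Submission
  imports Defs
begin


definition downclosed :: "(nat \<times> nat) set \<Rightarrow> bool" where
  "downclosed S \<longleftrightarrow> (\<forall>i j i' j'. (i,j) \<in> S \<longrightarrow> i' \<le> i \<longrightarrow> j' \<le> j \<longrightarrow> (i',j') \<in> S)"

definition shape :: "(nat \<times> nat) set \<Rightarrow> bool" where
  "shape S \<longleftrightarrow> finite S \<and> downclosed S"

fun vf :: "(nat \<times> nat) set \<Rightarrow> (nat \<times> nat) list \<Rightarrow> bool" where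
  "vf A [] = True"
| "vf A (c # cs) = (c \<notin> A \<and> shape (insert c A) \<and> vf (insert c A) cs)"

lemma vf_append: "vf A (xs @ ys) \<longleftrightarrow> vf A xs \<and> vf (A \<union> set xs) ys"
  by (induction xs arbitrary: A) auto

lemma vf_distinct: "vf A cs \<Longrightarrow> distinct cs \<and> set cs \<inter> A = {}"
  by (induction cs arbitrary: A) auto

lemma vf_shape: "vf A cs \<Longrightarrow> shape A \<Longrightarrow> shape (A \<union> set cs)"
proof (induction cs arbitrary: A)
  case (Cons c cs)
  hence "shape (insert c A \<union> set cs)" using Cons.IH[of "insert c A"] by simp
  moreover have "insert c A \<union> set cs = A \<union> set (c # cs)" by auto
  ultimately show ?case by simp
qed simp

lemma downclosed_Un: "downclosed A \<Longrightarrow> downclosed B \<Longrightarrow> downclosed (A \<union> B)"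
  unfolding downclosed_def by blast
lemma downclosed_Int: "downclosed A \<Longrightarrow> downclosed B \<Longrightarrow> downclosed (A \<inter> B)"
  unfolding downclosed_def by blast

lemma shape_bound:
  assumes "shape A" "(i,j) \<in> A" shows "i < card A" "j < card A"
proof -
  have f: "finite A" using assms unfolding shape_def by auto
  have "(\<lambda>i'. (i',0::nat)) ` {..i} \<subseteq> A" using assms unfolding shape_def downclosed_def by auto
  hence "card ((\<lambda>i'. (i',0::nat)) ` {..i}) \<le> card A" using f card_mono by blast
  moreover have "card ((\<lambda>i'. (i',0::nat)) ` {..i}) = Suc i"
    by (subst card_image) (auto simp: inj_on_def)
  ultimately show "i < card A" by simp
  have "(\<lambda>j'. (i, j')) ` {..j} \<subseteq> A" using assms unfolding shape_def downclosed_def by auto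
  hence "card ((\<lambda>j'. (i, j')) ` {..j}) \<le> card A" using f card_mono by blast
  moreover have "card ((\<lambda>j'. (i,j')) ` {..j}) = Suc j"
    by (subst card_image) (auto simp: inj_on_def)
  ultimately show "j < card A" by simp
qed

definition addc :: "(nat \<times> nat) set \<Rightarrow> (nat \<times> nat) set" where
  "addc S = {c. c \<notin> S \<and> shape (insert c S)}"
definition remc :: "(nat \<times> nat) set \<Rightarrow> (nat \<times> nat) set" where
  "remc S = {r. r \<in> S \<and> shape (S - {r})}"

definition Eset :: "(nat \<times> nat) set \<Rightarrow> nat \<Rightarrow> (nat \<times> nat) list set" where
  "Eset S m = {cs. length cs = m \<and> vf S cs}"
definition Ecnt where "Ecnt S m = card (Eset S m)"
definition Dset :: "(nat \<times> nat) set \<Rightarrow> nat \<Rightarrow> (nat \<times> nat) list set" where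
  "Dset S j = {cs. length cs = j \<and> set cs \<subseteq> S \<and> shape (S - set cs) \<and> vf (S - set cs) cs}"
definition Dcnt where "Dcnt S j = card (Dset S j)"
definition tt where "tt n = Ecnt {} n"

lemma shape_finite: "shape S \<Longrightarrow> finite S" by (simp add: shape_def)

lemma finite_addc: assumes "shape S" shows "finite (addc S)"
proof -
  have "addc S \<subseteq> {..card S} \<times> {..card S}"
  proof
    fix c assume c: "c \<in> addc S"
    obtain i j where cij: "c = (i,j)" by (cases c)
    have sh: "shape (insert c S)" "c \<notin> S" using c by (auto simp: addc_def)
    have "card (insert c S) = Suc (card S)" using sh assms shape_finite by auto
    thus "c \<in> {..card S} \<times> {..card S}" using shape_bound[OF sh(1), of i j] cij by auto
  qed
  thus ?thesis using finite_subset by blast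
qed

lemma finite_remc: "shape S \<Longrightarrow> finite (remc S)"
  unfolding remc_def using shape_finite by auto

lemma finite_Eset: assumes "shape S" shows "finite (Eset S m)"
proof -
  let ?B = "{..<card S + m} \<times> {..<card S + m}"
  have "Eset S m \<subseteq> {cs. set cs \<subseteq> ?B \<and> length cs = m}"
  proof (rule subsetI, rule CollectI, rule conjI)
    fix cs assume "cs \<in> Eset S m" thus "length cs = m" by (simp add: Eset_def)
  next
    fix cs assume cs: "cs \<in> Eset S m"
    show "set cs \<subseteq> ?B"
    proof
    fix c assume c: "c \<in> set cs"
    obtain c1 c2 where c12: "c = (c1,c2)" by (cases c)
    have v: "vf S cs" "length cs = m" using cs by (auto simp: Eset_def)
    have sh: "shape (S \<union> set cs)" using vf_shape[OF v(1) assms] .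
    have "card (S \<union> set cs) \<le> card S + card (set cs)" by (rule card_Un_le)
    also have "card (set cs) \<le> m" using v(2) card_length by metis
    finally have "card (S \<union> set cs) \<le> card S + m" by simp
    thus "c \<in> ?B" using shape_bound[OF sh, of c1 c2] c c12 by auto
    qed
  qed
  moreover have "finite {cs. set cs \<subseteq> ?B \<and> length cs = m}"
    by (rule finite_lists_length_eq) auto
  ultimately show ?thesis using finite_subset by blast
qed

lemma finite_Dset: assumes "shape S" shows "finite (Dset S j)"
proof -
  have "Dset S j \<subseteq> {cs. set cs \<subseteq> S \<and> length cs = j}" by (auto simp: Dset_def)
  moreover have "finite {cs. set cs \<subseteq> S \<and> length cs = j}"
    by (rule finite_lists_length_eq) (use assms shape_finite in auto)
  ultimately show ?thesis using finite_subset by blast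
qed

lemma Ecnt_0: "Ecnt S 0 = 1"
proof -
  have "{cs. length cs = 0 \<and> vf S cs} = {[]}" by auto
  thus ?thesis unfolding Ecnt_def Eset_def by simp
qed

lemma Dcnt_0: "shape S \<Longrightarrow> Dcnt S 0 = 1"
proof -
  assume "shape S"
  hence "Dset S 0 = {[]}" by (auto simp: Dset_def)
  thus ?thesis by (simp add: Dcnt_def)
qed

lemma Dcnt_big: assumes "shape S" "card S < j" shows "Dcnt S j = 0"
proof -
  have "Dset S j = {}"
  proof (rule ccontr)
    assume "Dset S j \<noteq> {}"
    then obtain cs where cs: "cs \<in> Dset S j" by auto
    hence "distinct cs" "set cs \<subseteq> S" "length cs = j" using vf_distinct by (auto simp: Dset_def)
    hence "j \<le> card S" using card_mono[OF shape_finite[OF assms(1)]] distinct_card by metis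
    thus False using assms by simp
  qed
  thus ?thesis by (simp add: Dcnt_def)
qed

lemma Ecnt_Suc: assumes "shape S"
  shows "Ecnt S (Suc m) = (\<Sum>c\<in>addc S. Ecnt (insert c S) m)"
proof -
  have eq: "Eset S (Suc m) = (\<lambda>(c,cs). c # cs) ` (SIGMA c:addc S. Eset (insert c S) m)"
  proof (safe)
    fix cs assume "cs \<in> Eset S (Suc m)"
    then obtain c cs' where "cs = c # cs'" "length cs' = m" "vf S (c # cs')"
      by (auto simp: Eset_def length_Suc_conv)
    thus "cs \<in> (\<lambda>(c,cs). c # cs) ` (SIGMA c:addc S. Eset (insert c S) m)"
      by (auto simp: Eset_def addc_def image_iff intro!: bexI[of _ "(c,cs')"])
  qed (auto simp: Eset_def addc_def)
  have "Ecnt S (Suc m) = card (SIGMA c:addc S. Eset (insert c S) m)"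
    unfolding Ecnt_def eq by (rule card_image) (auto simp: inj_on_def)
  also have "\<dots> = (\<Sum>c\<in>addc S. Ecnt (insert c S) m)"
    unfolding Ecnt_def using finite_addc[OF assms]
    by (intro card_SigmaI) (auto intro: finite_Eset simp: addc_def)
  finally show ?thesis .
qed

lemma Dcnt_Suc: assumes "shape S"
  shows "Dcnt S (Suc j) = (\<Sum>r\<in>remc S. Dcnt (S - {r}) j)"
proof -
  have eq: "Dset S (Suc j) = (\<lambda>(r,xs). xs @ [r]) ` (SIGMA r:remc S. Dset (S - {r}) j)"
  proof (safe)
    fix cs assume cs: "cs \<in> Dset S (Suc j)"
    then obtain xs r where cs': "cs = xs @ [r]" "length xs = j"
      by (auto simp: Dset_def length_Suc_conv_rev)
    have d: "distinct cs" using cs vf_distinct by (auto simp: Dset_def)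
    hence rxs: "r \<notin> set xs" using cs' by auto
    let ?B = "S - set cs"
    have B: "shape ?B" "vf ?B cs" "set cs \<subseteq> S" using cs by (auto simp: Dset_def)
    have v1: "vf ?B xs" and v2: "vf (?B \<union> set xs) [r]" using B(2) cs' vf_append by auto
    have BU: "?B \<union> set xs = S - {r}" using B(3) cs' rxs by auto
    have shr: "shape (S - {r})" using vf_shape[OF v1 B(1)] BU by simp
    have rS: "r \<in> remc S" using shr B(3) cs' by (auto simp: remc_def)
    have B2: "S - {r} - set xs = ?B" using cs' by auto
    have "xs \<in> Dset (S - {r}) j" using cs' B v1 B2 rxs by (auto simp: Dset_def)
    thus "cs \<in> (\<lambda>(r,xs). xs @ [r]) ` (SIGMA r:remc S. Dset (S - {r}) j)"
      using rS cs' by (auto simp: image_iff intro!: bexI[of _ "(r,xs)"])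
  next
    fix r xs assume r: "r \<in> remc S" and xs: "xs \<in> Dset (S - {r}) j"
    have rS: "r \<in> S" "shape (S - {r})" using r by (auto simp: remc_def)
    have x: "length xs = j" "set xs \<subseteq> S - {r}" "shape (S - {r} - set xs)" "vf (S - {r} - set xs) xs"
      using xs by (auto simp: Dset_def)
    have B2: "S - set (xs @ [r]) = S - {r} - set xs" by auto
    have BU: "S - {r} - set xs \<union> set xs = S - {r}" using x(2) by auto
    have "insert r (S - {r}) = S" using rS by auto
    hence v: "vf (S - {r} - set xs \<union> set xs) [r]" using BU rS assms by simp
    show "xs @ [r] \<in> Dset S (Suc j)"
      unfolding Dset_def using x rS B2 vf_append v by auto
  qed
  have "Dcnt S (Suc j) = card (SIGMA r:remc S. Dset (S - {r}) j)"
    unfolding Dcnt_def eq by (rule card_image) (auto simp: inj_on_def)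
  also have "\<dots> = (\<Sum>r\<in>remc S. Dcnt (S - {r}) j)"
    unfolding Dcnt_def using finite_remc[OF assms]
    by (intro card_SigmaI) (auto intro: finite_Dset simp: remc_def)
  finally show ?thesis .
qed



lemma initseg:
  fixes A :: "nat set"
  assumes "finite A" "\<forall>x\<in>A. \<forall>y\<le>x. y \<in> A"
  shows "A = {..<card A}"
proof -
  have "A \<subseteq> {..<card A}"
  proof
    fix x assume x: "x \<in> A"
    have "{..x} \<subseteq> A" using assms(2) x by auto
    hence "card {..x} \<le> card A" using assms(1) card_mono by blast
    thus "x \<in> {..<card A}" by simp
  qed
  moreover have "card A = card {..<card A}" by simp
  ultimately show ?thesis using card_subset_eq[of "{..<card A}" A] by auto
qed

lemma downclosedD: "downclosed S \<Longrightarrow> (i,j) \<in> S \<Longrightarrow> i' \<le> i \<Longrightarrow> j' \<le> j \<Longrightarrow> (i',j') \<in> S"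
  unfolding downclosed_def by blast

lemma shapeD: "shape S \<Longrightarrow> (i,j) \<in> S \<Longrightarrow> i' \<le> i \<Longrightarrow> j' \<le> j \<Longrightarrow> (i',j') \<in> S"
  unfolding shape_def downclosed_def by blast

definition rl :: "(nat \<times> nat) set \<Rightarrow> nat \<Rightarrow> nat" where
  "rl S i = card {j. (i,j) \<in> S}"

lemma mem_rl: assumes "shape S" shows "(i,j) \<in> S \<longleftrightarrow> j < rl S i"
proof -
  have f: "finite {j. (i,j) \<in> S}"
  proof -
    have "{j. (i,j) \<in> S} \<subseteq> snd ` S" by force
    thus ?thesis using shape_finite[OF assms] finite_subset by blast
  qed
  have "{j. (i,j) \<in> S} = {..<rl S i}" unfolding rl_def
    by (rule initseg[OF f]) (use assms in \<open>auto simp: shape_def downclosed_def\<close>)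
  thus ?thesis by (metis lessThan_iff mem_Collect_eq)
qed

lemma rl_mono: assumes "shape S" "i \<le> i'" shows "rl S i' \<le> rl S i"
proof -
  have "\<forall>j. j < rl S i' \<longrightarrow> j < rl S i"
    using assms mem_rl[OF assms(1)] unfolding shape_def downclosed_def by blast
  thus ?thesis by (meson not_less order_refl)
qed

lemma addc_char: assumes "shape S"
  shows "addc S = (\<lambda>i. (i, rl S i)) ` {i. i = 0 \<or> rl S i < rl S (i - 1)}"
proof (intro equalityI subsetI)
  fix c assume "c \<in> addc S"
  then obtain i j where c: "(i,j) \<in> addc S" and cij: "c = (i,j)" by (cases c) auto
  have n: "(i,j) \<notin> S" and sh: "shape (insert (i,j) S)" using c by (auto simp: addc_def)
  have dc: "downclosed (insert (i,j) S)" using sh by (simp add: shape_def)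
  have j1: "rl S i \<le> j" using n mem_rl[OF assms] by simp
  have j2: "j \<le> rl S i"
  proof (rule ccontr)
    assume "\<not> j \<le> rl S i"
    hence "(i, rl S i) \<in> insert (i,j) S" using downclosedD[OF dc, of i j i "rl S i"] by simp
    moreover have "(i, rl S i) \<notin> S" using mem_rl[OF assms] by simp
    ultimately show False using \<open>\<not> j \<le> rl S i\<close> by auto
  qed
  have j: "j = rl S i" using j1 j2 by simp
  have "i = 0 \<or> rl S i < rl S (i - 1)"
  proof (cases i)
    case (Suc i')
    have "(i', j) \<in> insert (i,j) S" using downclosedD[OF dc, of i j i' j] Suc by simp
    hence "(i', j) \<in> S" using Suc by auto
    thus ?thesis using mem_rl[OF assms] Suc j by simp
  qed simp
  thus "c \<in> (\<lambda>i. (i, rl S i)) ` {i. i = 0 \<or> rl S i < rl S (i - 1)}" using j cij by auto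
next
  fix c assume "c \<in> (\<lambda>i. (i, rl S i)) ` {i. i = 0 \<or> rl S i < rl S (i - 1)}"
  then obtain i where h: "i = 0 \<or> rl S i < rl S (i - 1)" and ci: "c = (i, rl S i)" by auto
  have n: "(i, rl S i) \<notin> S" using mem_rl[OF assms] by simp
  have "downclosed (insert (i, rl S i) S)"
    unfolding downclosed_def
  proof (intro allI impI)
    fix a b a' b' assume ab: "(a,b) \<in> insert (i, rl S i) S" and le: "a' \<le> a" "b' \<le> b"
    show "(a',b') \<in> insert (i, rl S i) S"
    proof (cases "(a,b) \<in> S")
      case True thus ?thesis using shapeD[OF assms True le] by simp
    next
      case False
      hence ab': "a = i" "b = rl S i" using ab by auto
      show ?thesis
      proof (cases "a' = i")
        case True
        thus ?thesis using le ab' mem_rl[OF assms, of i b'] by (cases "b' = b") auto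
      next
        case False
        hence "a' \<le> i - 1" "i \<noteq> 0" using le ab' by auto
        hence "rl S i < rl S a'" using h rl_mono[OF assms \<open>a' \<le> i - 1\<close>] by auto
        thus ?thesis using le ab' mem_rl[OF assms] by auto
      qed
    qed
  qed
  hence "shape (insert (i, rl S i) S)" using assms by (simp add: shape_def)
  thus "c \<in> addc S" using n ci by (simp add: addc_def)
qed

lemma remc_char: assumes "shape S"
  shows "remc S = (\<lambda>i. (i, rl S i - 1)) ` {i. rl S (Suc i) < rl S i}"
proof (intro equalityI subsetI)
  fix c assume "c \<in> remc S"
  then obtain i j where c: "(i,j) \<in> remc S" and cij: "c = (i,j)" by (cases c) auto
  have n: "(i,j) \<in> S" and sh: "shape (S - {(i,j)})" using c by (auto simp: remc_def)
  have dc: "downclosed (S - {(i,j)})" using sh by (simp add: shape_def)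
  have j1: "j < rl S i" using n mem_rl[OF assms] by simp
  have j2: "j = rl S i - 1"
  proof (rule ccontr)
    assume "j \<noteq> rl S i - 1"
    hence "(i, Suc j) \<in> S - {(i,j)}" using j1 mem_rl[OF assms] by auto
    hence "(i, j) \<in> S - {(i,j)}" using downclosedD[OF dc, of i "Suc j" i j] by simp
    thus False by simp
  qed
  have "rl S (Suc i) < rl S i"
  proof (rule ccontr)
    assume "\<not> rl S (Suc i) < rl S i"
    hence "(Suc i, j) \<in> S - {(i,j)}" using j1 mem_rl[OF assms] by auto
    hence "(i, j) \<in> S - {(i,j)}" using downclosedD[OF dc, of "Suc i" j i j] by simp
    thus False by simp
  qed
  thus "c \<in> (\<lambda>i. (i, rl S i - 1)) ` {i. rl S (Suc i) < rl S i}" using j2 cij by auto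
next
  fix c assume "c \<in> (\<lambda>i. (i, rl S i - 1)) ` {i. rl S (Suc i) < rl S i}"
  then obtain i where h: "rl S (Suc i) < rl S i" and ci: "c = (i, rl S i - 1)" by auto
  have n: "(i, rl S i - 1) \<in> S" using mem_rl[OF assms] h by simp
  have "downclosed (S - {(i, rl S i - 1)})"
    unfolding downclosed_def
  proof (intro allI impI)
    fix a b a' b' assume ab: "(a,b) \<in> S - {(i, rl S i - 1)}" and le: "a' \<le> a" "b' \<le> b"
    have "(a',b') \<in> S" using ab shapeD[OF assms _ le] by simp
    moreover have "(a',b') \<noteq> (i, rl S i - 1)"
    proof
      assume eq: "(a',b') = (i, rl S i - 1)"
      have bl: "b < rl S a" using ab mem_rl[OF assms] by auto
      have "rl S a \<le> rl S i" using rl_mono[OF assms] le eq by auto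
      hence b: "b = rl S i - 1" using bl le eq by auto
      show False
      proof (cases "a = i")
        case True thus False using ab b by auto
      next
        case False
        hence "Suc i \<le> a" using le eq by auto
        hence "rl S a \<le> rl S (Suc i)" using rl_mono[OF assms] by auto
        thus False using bl b h by auto
      qed
    qed
    ultimately show "(a',b') \<in> S - {(i, rl S i - 1)}" by simp
  qed
  hence "shape (S - {(i, rl S i - 1)})" using assms by (simp add: shape_def)
  thus "c \<in> remc S" using n ci by (simp add: remc_def)
qed

lemma card_addc: assumes "shape S" shows "card (addc S) = Suc (card (remc S))"
proof -
  let ?R = "{i. rl S (Suc i) < rl S i}"
  have finR: "finite ?R"
  proof -
    have "?R \<subseteq> {..<card S}"
    proof
      fix i assume "i \<in> ?R"
      hence "(i,0) \<in> S" using mem_rl[OF assms] by auto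
      thus "i \<in> {..<card S}" using shape_bound[OF assms] by auto
    qed
    thus ?thesis using finite_subset by blast
  qed
  have I: "{i. i = 0 \<or> rl S i < rl S (i - 1)} = insert 0 (Suc ` ?R)"
  proof (intro equalityI subsetI)
    fix i assume "i \<in> {i. i = 0 \<or> rl S i < rl S (i - 1)}"
    thus "i \<in> insert 0 (Suc ` ?R)" by (cases i) auto
  qed auto
  have "card (addc S) = card (insert 0 (Suc ` ?R))"
    unfolding addc_char[OF assms] I by (rule card_image) (auto simp: inj_on_def)
  also have "\<dots> = Suc (card ?R)" using finR by (auto simp: card_image)
  also have "card ?R = card (remc S)"
    unfolding remc_char[OF assms] by (rule card_image[symmetric]) (auto simp: inj_on_def)
  finally show ?thesis .
qed



lemma shape_Un: "shape A \<Longrightarrow> shape B \<Longrightarrow> shape (A \<union> B)"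
  by (simp add: shape_def downclosed_Un)
lemma shape_Int: "shape A \<Longrightarrow> shape B \<Longrightarrow> shape (A \<inter> B)"
  by (simp add: shape_def downclosed_Int)

lemma swap_sum:
  assumes S: "shape S"
  shows "(\<Sum>c\<in>addc S. \<Sum>r\<in>remc (insert c S) - {c}. g (insert c S - {r}))
       = (\<Sum>r\<in>remc S. \<Sum>c\<in>addc (S - {r}) - {r}. g (insert c (S - {r})))"
proof -
  have fa: "finite (addc S)" by (rule finite_addc[OF S])
  have fr: "finite (remc S)" by (rule finite_remc[OF S])
  have L: "(\<Sum>c\<in>addc S. \<Sum>r\<in>remc (insert c S) - {c}. g (insert c S - {r}))
     = (\<Sum>(c,r)\<in>(SIGMA c:addc S. remc (insert c S) - {c}). g (insert c S - {r}))"
    by (rule sum.Sigma[OF fa]) (auto intro: finite_remc simp: addc_def)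
  have R: "(\<Sum>r\<in>remc S. \<Sum>c\<in>addc (S - {r}) - {r}. g (insert c (S - {r})))
     = (\<Sum>(r,c)\<in>(SIGMA r:remc S. addc (S - {r}) - {r}). g (insert c (S - {r})))"
    by (rule sum.Sigma[OF fr]) (auto intro: finite_addc simp: remc_def)
  have M: "(\<Sum>(c,r)\<in>(SIGMA c:addc S. remc (insert c S) - {c}). g (insert c S - {r}))
     = (\<Sum>(r,c)\<in>(SIGMA r:remc S. addc (S - {r}) - {r}). g (insert c (S - {r})))"
  proof (rule sum.reindex_bij_witness[where i=prod.swap and j=prod.swap])
    fix p assume p: "p \<in> (SIGMA r:remc S. addc (S - {r}) - {r})"
    obtain r c where pe: "p = (r,c)" by (cases p)
    have h: "r \<in> S" "shape (S - {r})" "c \<notin> S - {r}" "c \<noteq> r" "shape (insert c (S - {r}))"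
      using p pe by (auto simp: remc_def addc_def)
    have cS: "c \<notin> S" using h by auto
    have e1: "insert c S = S \<union> insert c (S - {r})" using h by auto
    have sh1: "shape (insert c S)" unfolding e1 by (rule shape_Un[OF S h(5)])
    have e2: "insert c S - {r} = insert c (S - {r})" using h by auto
    show "prod.swap p \<in> (SIGMA c:addc S. remc (insert c S) - {c})"
      using pe cS sh1 h e2 by (auto simp: addc_def remc_def)
    show "prod.swap (prod.swap p) = p" by simp
  next
    fix p assume p: "p \<in> (SIGMA c:addc S. remc (insert c S) - {c})"
    obtain c r where pe: "p = (c,r)" by (cases p)
    have h: "c \<notin> S" "shape (insert c S)" "r \<in> insert c S" "r \<noteq> c" "shape (insert c S - {r})"
      using p pe by (auto simp: remc_def addc_def)
    have rS: "r \<in> S" using h by auto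
    have e1: "S - {r} = S \<inter> (insert c S - {r})" using h by auto
    have sh1: "shape (S - {r})" unfolding e1 by (rule shape_Int[OF S h(5)])
    have e2: "insert c S - {r} = insert c (S - {r})" using h by auto
    show "prod.swap p \<in> (SIGMA r:remc S. addc (S - {r}) - {r})"
      using pe rS sh1 h e2 by (auto simp: addc_def remc_def)
    show "prod.swap (prod.swap p) = p" by simp
    show "(case prod.swap p of (r, c) \<Rightarrow> g (insert c (S - {r}))) = (case p of (c, r) \<Rightarrow> g (insert c S - {r}))"
      using pe e2 by simp
  qed
  show ?thesis using L M R by simp
qed

lemma lemmaX:
  assumes "shape S"
  shows "(\<Sum>c\<in>addc S. Dcnt (insert c S) j) = Dcnt S (Suc j) + Dcnt S j + j * Dcnt S (j - 1)"
  using assms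
proof (induction j arbitrary: S)
  case 0
  have "(\<Sum>c\<in>addc S. Dcnt (insert c S) 0) = card (addc S)"
    by (simp add: Dcnt_0 addc_def)
  moreover have "Dcnt S (Suc 0) = card (remc S)"
    using Dcnt_Suc[OF 0] by (simp add: Dcnt_0 remc_def)
  ultimately show ?case using card_addc[OF 0] Dcnt_0[OF 0] by simp
next
  case (Suc j)
  note S = Suc.prems
  have step1: "Dcnt (insert c S) (Suc j) = Dcnt S j + (\<Sum>r\<in>remc (insert c S) - {c}. Dcnt (insert c S - {r}) j)"
    if c: "c \<in> addc S" for c
  proof -
    have sh: "shape (insert c S)" "c \<notin> S" using c by (auto simp: addc_def)
    have cr: "c \<in> remc (insert c S)" using sh S by (auto simp: remc_def)
    have "Dcnt (insert c S) (Suc j) = (\<Sum>r\<in>remc (insert c S). Dcnt (insert c S - {r}) j)"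
      by (rule Dcnt_Suc[OF sh(1)])
    also have "\<dots> = Dcnt (insert c S - {c}) j + (\<Sum>r\<in>remc (insert c S) - {c}. Dcnt (insert c S - {r}) j)"
      by (rule sum.remove[OF finite_remc[OF sh(1)] cr])
    also have "insert c S - {c} = S" using sh by auto
    finally show ?thesis .
  qed
  have step2: "Dcnt S j + (\<Sum>c\<in>addc (S - {r}) - {r}. Dcnt (insert c (S - {r})) j)
     = Dcnt (S - {r}) (Suc j) + Dcnt (S - {r}) j + j * Dcnt (S - {r}) (j - 1)"
    if r: "r \<in> remc S" for r
  proof -
    have sh: "shape (S - {r})" "r \<in> S" using r by (auto simp: remc_def)
    have ra: "r \<in> addc (S - {r})" using sh S by (auto simp: addc_def insert_absorb)
    have "Dcnt (S - {r}) (Suc j) + Dcnt (S - {r}) j + j * Dcnt (S - {r}) (j - 1)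
       = (\<Sum>c\<in>addc (S - {r}). Dcnt (insert c (S - {r})) j)" using Suc.IH[OF sh(1)] by simp
    also have "\<dots> = Dcnt (insert r (S - {r})) j + (\<Sum>c\<in>addc (S - {r}) - {r}. Dcnt (insert c (S - {r})) j)"
      by (rule sum.remove[OF finite_addc[OF sh(1)] ra])
    also have "insert r (S - {r}) = S" using sh by auto
    finally show ?thesis by simp
  qed
  have sj: "j * (\<Sum>r\<in>remc S. Dcnt (S - {r}) (j - 1)) = j * Dcnt S j"
  proof (cases j)
    case (Suc j') thus ?thesis using Dcnt_Suc[OF S, of j'] by simp
  qed simp
  define Q where "Q = (\<Sum>r\<in>remc S. \<Sum>c\<in>addc (S - {r}) - {r}. Dcnt (insert c (S - {r})) j)"
  have "(\<Sum>c\<in>addc S. Dcnt (insert c S) (Suc j))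
      = (\<Sum>c\<in>addc S. Dcnt S j + (\<Sum>r\<in>remc (insert c S) - {c}. Dcnt (insert c S - {r}) j))"
    by (rule sum.cong) (auto simp: step1)
  also have "\<dots> = card (addc S) * Dcnt S j + Q"
    unfolding Q_def sum.distrib using swap_sum[OF S, of "\<lambda>T. Dcnt T j"] by simp
  finally have A: "(\<Sum>c\<in>addc S. Dcnt (insert c S) (Suc j)) = card (addc S) * Dcnt S j + Q" .
  have "card (remc S) * Dcnt S j + Q = (\<Sum>r\<in>remc S. Dcnt S j + (\<Sum>c\<in>addc (S - {r}) - {r}. Dcnt (insert c (S - {r})) j))"
    unfolding Q_def sum.distrib by simp
  also have "\<dots> = (\<Sum>r\<in>remc S. Dcnt (S - {r}) (Suc j) + Dcnt (S - {r}) j + j * Dcnt (S - {r}) (j - 1))"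
    by (rule sum.cong) (auto simp: step2)
  also have "\<dots> = Dcnt S (Suc (Suc j)) + Dcnt S (Suc j) + j * Dcnt S j"
    unfolding sum.distrib sum_distrib_left[symmetric] sj using Dcnt_Suc[OF S] by simp
  finally have B: "card (remc S) * Dcnt S j + Q = Dcnt S (Suc (Suc j)) + Dcnt S (Suc j) + j * Dcnt S j" .
  show ?case using A B card_addc[OF S] by simp
qed



lemma shape_empty: "shape {}" by (simp add: shape_def downclosed_def)
lemma shape_00: "shape {(0,0)}" by (simp add: shape_def downclosed_def)

lemma addc_empty: "addc {} = {(0,0)}"
proof (intro equalityI subsetI)
  fix c assume c: "c \<in> addc {}"
  obtain i j where cij: "c = (i,j)" by (cases c)
  have "shape {(i,j)}" using c cij by (simp add: addc_def)
  hence "(0,0) \<in> {(i,j)}" using shapeD[of "{(i,j)}" i j 0 0] by simp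
  thus "c \<in> {(0,0)}" using cij by simp
qed (simp add: addc_def shape_00)

lemma remc_00: "remc {(0,0)} = {(0,0)}"
  by (auto simp: remc_def shape_empty)

lemma Dcnt_00_1: "Dcnt {(0,0)} (Suc 0) = 1"
  using Dcnt_Suc[OF shape_00, of 0] by (simp add: remc_00 Dcnt_0 shape_empty)

lemma tt_Suc: "tt (Suc q) = Ecnt {(0,0)} q"
  unfolding tt_def using Ecnt_Suc[OF shape_empty, of q] by (simp add: addc_empty)

lemma sum_first_two:
  fixes f :: "nat \<Rightarrow> nat"
  assumes "\<And>j. 2 \<le> j \<Longrightarrow> f j = 0"
  shows "(\<Sum>j\<le>q. f j) = f 0 + (if q = 0 then 0 else f 1)"
  using assms by (induction q) (auto simp: sum.atMost_Suc)

lemma main_identity: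
  assumes "shape S"
  shows "Ecnt S m = (\<Sum>j\<le>m. (m choose j) * Dcnt S j * tt (m - j))"
  using assms
proof (induction m arbitrary: S rule: less_induct)
  case (less m)
  show ?case
  proof (cases m)
    case 0 thus ?thesis using Dcnt_0[OF less.prems] by (simp add: Ecnt_0 tt_def)
  next
    case (Suc n)
    note S = less.prems
    write Dcnt ("D")
    have rec: "tt (Suc q) = tt q + q * tt (q - 1)" if q: "q \<le> n" for q
    proof -
      have "tt (Suc q) = (\<Sum>j\<le>q. (q choose j) * Dcnt {(0,0)} j * tt (q - j))"
        unfolding tt_Suc using less.IH[of q "{(0,0)}"] q Suc shape_00 by simp
      also have "\<dots> = tt q + q * tt (q - 1)"
        by (subst sum_first_two) (auto simp: Dcnt_big[OF shape_00] Dcnt_0[OF shape_00] Dcnt_00_1)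
      finally show ?thesis .
    qed
    define T1 where "T1 = (\<Sum>j\<le>n. (n choose j) * tt (n - j) * D S (Suc j))"
    define T2 where "T2 = (\<Sum>j\<le>n. (n choose j) * tt (n - j) * D S j)"
    define T3 where "T3 = (\<Sum>j\<le>n. (n choose j) * tt (n - j) * (j * D S (j - 1)))"
    define V where "V = (\<Sum>i\<le>n. (n choose i) * (n - i) * D S i * tt (n - i - 1))"
    have "Ecnt S (Suc n) = (\<Sum>c\<in>addc S. \<Sum>j\<le>n. (n choose j) * D (insert c S) j * tt (n - j))"
      unfolding Ecnt_Suc[OF S]
      by (rule sum.cong) (auto simp: Suc addc_def intro!: less.IH)
    also have "\<dots> = (\<Sum>j\<le>n. (n choose j) * tt (n - j) * (\<Sum>c\<in>addc S. D (insert c S) j))"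
      by (subst sum.swap) (simp add: sum_distrib_left mult.commute mult.left_commute)
    also have "\<dots> = (\<Sum>j\<le>n. (n choose j) * tt (n - j) * (D S (Suc j) + D S j + j * D S (j - 1)))"
      using lemmaX[OF S] by simp
    also have "\<dots> = T1 + T2 + T3"
      unfolding T1_def T2_def T3_def sum.distrib[symmetric] by (simp add: algebra_simps)
    finally have E: "Ecnt S (Suc n) = T1 + T2 + T3" .
    have T3V: "T3 = V"
    proof (cases n)
      case 0 thus ?thesis by (simp add: T3_def V_def)
    next
      case (Suc p)
      have "T3 = (\<Sum>i\<le>p. (Suc p choose Suc i) * tt (p - i) * (Suc i * D S i))"
        unfolding T3_def Suc sum.atMost_Suc_shift by simp
      also have "\<dots> = (\<Sum>i\<le>p. (Suc p choose i) * (Suc p - i) * D S i * tt (p - i))"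
      proof (rule sum.cong)
        fix i assume "i \<in> {..p}"
        have "Suc i * (Suc p choose Suc i) = (Suc p - i) * (Suc p choose i)"
          using Suc_times_binomial[of i p] binomial_absorb_comp[of "Suc p" i] by simp
        thus "(Suc p choose Suc i) * tt (p - i) * (Suc i * D S i) = (Suc p choose i) * (Suc p - i) * D S i * tt (p - i)"
          by (metis (no_types, lifting) mult.commute mult.left_commute)
      qed simp
      also have "\<dots> = V"
        unfolding V_def Suc sum.atMost_Suc by simp
      finally show ?thesis .
    qed
    have "(\<Sum>i\<le>Suc n. (Suc n choose i) * D S i * tt (Suc n - i))
        = tt (Suc n) + (\<Sum>j\<le>n. (Suc n choose Suc j) * D S (Suc j) * tt (n - j))"
      unfolding sum.atMost_Suc_shift using Dcnt_0[OF S] by simp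
    also have "\<dots> = tt (Suc n) + (\<Sum>j\<le>n. (n choose Suc j) * D S (Suc j) * tt (n - j)) + T1"
      unfolding T1_def binomial_Suc_Suc by (simp add: algebra_simps sum.distrib)
    also have "tt (Suc n) + (\<Sum>j\<le>n. (n choose Suc j) * D S (Suc j) * tt (n - j))
        = (\<Sum>i\<le>Suc n. (n choose i) * D S i * tt (Suc n - i))"
      unfolding sum.atMost_Suc_shift using Dcnt_0[OF S] by simp
    also have "\<dots> = (\<Sum>i\<le>n. (n choose i) * D S i * tt (Suc (n - i)))"
      unfolding sum.atMost_Suc by (simp add: Suc_diff_le)
    also have "\<dots> = (\<Sum>i\<le>n. (n choose i) * D S i * (tt (n - i) + (n - i) * tt (n - i - 1)))"
      by (rule sum.cong) (auto simp: rec)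
    also have "\<dots> = T2 + V"
      unfolding T2_def V_def sum.distrib[symmetric] by (simp add: algebra_simps)
    finally show ?thesis using E T3V Suc by simp
  qed
qed



lemma tt_rec: "tt (Suc q) = tt q + q * tt (q - 1)"
proof -
  have "tt (Suc q) = (\<Sum>j\<le>q. (q choose j) * Dcnt {(0,0)} j * tt (q - j))"
    unfolding tt_Suc using main_identity[OF shape_00] by simp
  also have "\<dots> = tt q + q * tt (q - 1)"
    by (subst sum_first_two) (auto simp: Dcnt_big[OF shape_00] Dcnt_0[OF shape_00] Dcnt_00_1)
  finally show ?thesis .
qed

lemma tt_0: "tt 0 = 1" by (simp add: tt_def Ecnt_0)
lemma tt_SS: "tt (Suc (Suc q)) = tt (Suc q) + Suc q * tt q"
  using tt_rec[of "Suc q"] by simp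
lemma tt_1: "tt (Suc 0) = 1" using tt_rec[of 0] tt_0 by simp
lemma tt_mono_Suc: "tt n \<le> tt (Suc n)" using tt_rec[of n] by simp
lemma tt_mono: "n \<le> m \<Longrightarrow> tt n \<le> tt m"
  by (rule lift_Suc_mono_le[of tt]) (auto intro: tt_mono_Suc)
lemma tt_pos: "0 < tt n"
  using tt_mono[of 0 n] tt_0 by simp

lemma ratio_bounds:
  "sqrt (real (Suc n)) * tt n \<le> tt (Suc n) \<and> tt (Suc n) \<le> (1 + sqrt (real (Suc n))) * tt n"
proof (induction n)
  case 0 thus ?case by (simp add: tt_0 tt_1)
next
  case (Suc n)
  define x where "x = real (tt (Suc n))"
  define y where "y = real (tt n)"
  define s where "s = sqrt (real (Suc n))"
  define s' where "s' = sqrt (real (Suc (Suc n)))"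
  have IH: "s * y \<le> x" "x \<le> (1 + s) * y" using Suc unfolding x_def y_def s_def by auto
  have y0: "0 < y" using tt_pos y_def by simp
  have s0: "1 \<le> s" unfolding s_def by simp
  have ss: "s * s = real (Suc n)" unfolding s_def by simp
  have ss': "s' * s' = s * s + 1" unfolding s'_def ss by simp
  have s'0: "0 \<le> s'" unfolding s'_def by simp
  have ssle: "s \<le> s'" unfolding s_def s'_def by simp
  have new: "real (tt (Suc (Suc n))) = x + (s * s) * y"
    unfolding x_def y_def ss tt_SS by (simp add: algebra_simps)
  have up: "x + (s*s)*y \<le> (1 + s') * x"
  proof -
    have "(s*s)*y \<le> s * x" using IH(1) s0 by (simp add: mult.assoc mult_left_mono)
    moreover have "s * x \<le> s' * x" using ssle x_def by (intro mult_right_mono) auto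
    ultimately show ?thesis by (simp add: algebra_simps)
  qed
  have key: "(s' - 1) * (1 + s) \<le> s * s"
  proof -
    have e1: "(s' * (1 + s))^2 = (s*s+1)*(1+s)^2"
      by (simp add: power_mult_distrib power2_eq_square[of s'] ss')
    have e2: "(s*s+1)*(1+s)^2 + s*s = (s * s + s + 1)^2"
      by (simp add: power2_eq_square algebra_simps)
    have "(s' * (1 + s))^2 \<le> (s * s + s + 1)^2" using e1 e2
      by (metis le_add_same_cancel1 mult_nonneg_nonneg s0 order_trans zero_le_one)
    hence "s' * (1 + s) \<le> s * s + s + 1"
      by (rule power2_le_imp_le) (use s0 in simp)
    thus ?thesis by (simp add: algebra_simps)
  qed
  have lo: "s' * x \<le> x + (s*s)*y"
  proof -
    have "(s' - 1) * x \<le> (s' - 1) * ((1 + s) * y)"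
      using IH(2) ssle s0 by (intro mult_left_mono) auto
    also have "\<dots> = ((s' - 1) * (1 + s)) * y" by simp
    also have "\<dots> \<le> (s*s) * y" using key y0 by (intro mult_right_mono) auto
    finally show ?thesis by (simp add: algebra_simps)
  qed
  show ?case using up lo new unfolding x_def s'_def by simp
qed



definition T :: "nat \<Rightarrow> real" where "T n = real (tt n)"

lemma T_pos: "0 < T n" by (simp add: T_def tt_pos)

lemma T_SS: "T (Suc (Suc n)) = T (Suc n) + real (Suc n) * T n"
  unfolding T_def tt_SS by (simp add: algebra_simps)

lemma T_bounds: "sqrt (real (Suc n)) * T n \<le> T (Suc n)" "T (Suc n) \<le> (1 + sqrt (real (Suc n))) * T n"
  using ratio_bounds[of n] unfolding T_def by auto

lemma T_mono: "n \<le> m \<Longrightarrow> T n \<le> T m"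
  unfolding T_def using tt_mono by simp

lemma inv_sqrt_lim: "(\<lambda>n. 1 / sqrt (real (Suc n))) \<longlonglongrightarrow> 0"
proof -
  have "(\<lambda>n. sqrt (inverse (real (Suc n)))) \<longlonglongrightarrow> sqrt 0"
    by (rule tendsto_real_sqrt[OF LIMSEQ_inverse_real_of_nat])
  thus ?thesis by (simp add: real_sqrt_inverse divide_inverse)
qed

lemma L1: "(\<lambda>n. T n / T (Suc n)) \<longlonglongrightarrow> 0"
proof (rule tendsto_sandwich[OF _ _ tendsto_const inv_sqrt_lim])
  show "\<forall>\<^sub>F n in sequentially. 0 \<le> T n / T (Suc n)"
    using T_pos by (simp add: less_imp_le)
  show "\<forall>\<^sub>F n in sequentially. T n / T (Suc n) \<le> 1 / sqrt (real (Suc n))"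
  proof (rule always_eventually, rule allI)
    fix n
    have p: "0 < T n" "0 < T (Suc n)" "0 < sqrt (real (Suc n))" using T_pos by auto
    show "T n / T (Suc n) \<le> 1 / sqrt (real (Suc n))"
      using T_bounds(1)[of n] p by (simp add: divide_simps mult.commute)
  qed
qed

lemma W: "(\<lambda>n. T (Suc n) / (real (Suc n) * T n)) \<longlonglongrightarrow> 0"
proof (rule tendsto_sandwich[OF _ _ tendsto_const])
  show "\<forall>\<^sub>F n in sequentially. 0 \<le> T (Suc n) / (real (Suc n) * T n)"
    using T_pos by (simp add: less_imp_le)
  show "(\<lambda>n. inverse (real (Suc n)) + 1 / sqrt (real (Suc n))) \<longlonglongrightarrow> 0"
    using tendsto_add[OF LIMSEQ_inverse_real_of_nat inv_sqrt_lim] by simp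
  show "\<forall>\<^sub>F n in sequentially. T (Suc n) / (real (Suc n) * T n) \<le> inverse (real (Suc n)) + 1 / sqrt (real (Suc n))"
  proof (rule always_eventually, rule allI)
    fix n
    have p: "0 < T n" "0 < real (Suc n)" using T_pos by auto
    have "T (Suc n) / (real (Suc n) * T n) \<le> (1 + sqrt (real (Suc n))) * T n / (real (Suc n) * T n)"
      using T_bounds(2)[of n] p by (intro divide_right_mono) auto
    also have "\<dots> = (1 + sqrt (real (Suc n))) / real (Suc n)" using p by simp
    also have "\<dots> = inverse (real (Suc n)) + 1 / sqrt (real (Suc n))"
    proof -
      have sq: "sqrt (real (Suc n)) * sqrt (real (Suc n)) = real (Suc n)" by simp
      have sp: "0 < sqrt (real (Suc n))" by simp
      have "sqrt (real (Suc n)) / real (Suc n) = 1 / sqrt (real (Suc n))"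
        using sp sq by (simp add: divide_simps)
      thus ?thesis by (simp add: add_divide_distrib divide_inverse distrib_right)
    qed
    finally show "T (Suc n) / (real (Suc n) * T n) \<le> inverse (real (Suc n)) + 1 / sqrt (real (Suc n))" .
  qed
qed

lemma L2: "(\<lambda>n. real (Suc n) * T n / T (Suc (Suc n))) \<longlonglongrightarrow> 1"
proof -
  have eq: "real (Suc n) * T n / T (Suc (Suc n)) = 1 / (T (Suc n) / (real (Suc n) * T n) + 1)" for n
  proof -
    have p: "0 < T n" "0 < real (Suc n)" "0 < T (Suc n)" using T_pos by auto
    have gen: "a / (b + a) = 1 / (b / a + 1)" if "0 < a" "0 \<le> b" for a b :: real
      using that by (simp add: field_simps)
    show ?thesis unfolding T_SS using p by (intro gen) auto
  qed
  have "(\<lambda>n. 1 / (T (Suc n) / (real (Suc n) * T n) + 1)) \<longlonglongrightarrow> 1 / (0 + 1)"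
    by (intro tendsto_intros W) simp
  thus ?thesis unfolding eq by simp
qed

lemma ratio_lim: "(\<lambda>p. (real p + a) / (real p + b)) \<longlonglongrightarrow> 1" if "1 \<le> b" for a b :: real
proof -
  have eq: "(real p + a) / (real p + b) = 1 + (a - b) * inverse (real p + b)" for p
    using that by (simp add: field_simps)
  have i: "(\<lambda>p. inverse (real p + b)) \<longlonglongrightarrow> 0"
  proof (rule tendsto_sandwich[OF _ _ tendsto_const LIMSEQ_inverse_real_of_nat])
    show "\<forall>\<^sub>F n in sequentially. 0 \<le> inverse (real n + b)" using that by simp
    show "\<forall>\<^sub>F n in sequentially. inverse (real n + b) \<le> inverse (real (Suc n))"
      using that by (intro always_eventually allI le_imp_inverse_le) auto
  qed
  have "(\<lambda>p. 1 + (a - b) * inverse (real p + b)) \<longlonglongrightarrow> 1 + (a - b) * 0"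
    by (intro tendsto_intros i)
  thus ?thesis unfolding eq by simp
qed



lemma aux1: "b \<noteq> 0 \<Longrightarrow> a / b * (b * c / d) = a * c / (d::real)"
  by (simp add: field_simps)
lemma aux2: "T1 \<noteq> 0 \<Longrightarrow> F * (A * C) * P / T2 = (F * C * P / T1) * (A * T1 / (T2::real))"
  by (simp add: field_simps)

lemma H: "(\<lambda>p. fact k * real (p + k choose k) * T p / T (p + 2 * k)) \<longlonglongrightarrow> 1"
proof (induction k)
  case 0
  have "(\<lambda>p. fact 0 * real (p + 0 choose 0) * T p / T (p + 2 * 0)) = (\<lambda>p. 1)"
    using T_pos by (auto intro!: ext simp: less_imp_neq[symmetric])
  thus ?case by simp
next
  case (Suc k)
  define g where "g p = (real (Suc (p + k)) / real (Suc (p + 2*k))) * (real (Suc (p + 2*k)) * T (p + 2*k) / T (Suc (Suc (p + 2*k))))" for p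
  have eq: "fact (Suc k) * real (p + Suc k choose Suc k) * T p / T (p + 2 * Suc k)
      = (fact k * real (p + k choose k) * T p / T (p + 2 * k)) * g p" for p
  proof -
    have b: "real (Suc k) * real (p + Suc k choose Suc k) = real (Suc (p + k)) * real (p + k choose k)"
    proof -
      have "Suc k * (p + Suc k choose Suc k) = Suc (p + k) * (p + k choose k)"
        using Suc_times_binomial[of k "p + k"] by simp
      hence "real (Suc k * (p + Suc k choose Suc k)) = real (Suc (p + k) * (p + k choose k))"
        by (rule arg_cong)
      thus ?thesis by (simp only: of_nat_mult)
    qed
    have f: "fact (Suc k) = real (Suc k) * fact k" by simp
    have pos: "0 < T (p + 2*k)" "0 < T (Suc (Suc (p + 2*k)))" "0 < real (p + (2*k+1))" using T_pos by auto
    have e2: "p + 2 * Suc k = Suc (Suc (p + 2*k))" by simp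
    have "fact (Suc k) * real (p + Suc k choose Suc k) * T p / T (p + 2 * Suc k)
        = fact k * (real (Suc k) * real (p + Suc k choose Suc k)) * T p / T (Suc (Suc (p + 2*k)))"
      unfolding f e2 by (simp add: algebra_simps)
    also have "\<dots> = fact k * (real (Suc (p + k)) * real (p + k choose k)) * T p / T (Suc (Suc (p + 2*k)))"
      unfolding b ..
    also have "\<dots> = (fact k * real (p + k choose k) * T p / T (p + 2 * k)) * g p"
    proof -
      have gs: "g p = real (Suc (p + k)) * T (p + 2*k) / T (Suc (Suc (p + 2*k)))"
        unfolding g_def by (rule aux1) simp
      show ?thesis unfolding gs using pos by (intro aux2) simp
    qed
    finally show ?thesis .
  qed
  have g: "g \<longlonglongrightarrow> 1 * 1"
    unfolding g_def
  proof (rule tendsto_mult)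
    have "(\<lambda>p. (real p + real (k+1)) / (real p + real (2*k+1))) \<longlonglongrightarrow> 1"
      by (rule ratio_lim) simp
    thus "(\<lambda>p. real (Suc (p + k)) / real (Suc (p + 2*k))) \<longlonglongrightarrow> 1" by (simp add: add_ac)
    show "(\<lambda>p. real (Suc (p + 2*k)) * T (p + 2*k) / T (Suc (Suc (p + 2*k)))) \<longlonglongrightarrow> 1"
      using LIMSEQ_ignore_initial_segment[OF L2, of "2*k"] by simp
  qed
  have "(\<lambda>p. (fact k * real (p + k choose k) * T p / T (p + 2 * k)) * g p) \<longlonglongrightarrow> 1 * (1 * 1)"
    by (rule tendsto_mult[OF Suc.IH g])
  thus ?case unfolding eq by simp
qed

lemma Glim: "(\<lambda>m. real (m choose j) * T (m - j) / T (m + j)) \<longlonglongrightarrow> 1 / fact j"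
proof (rule LIMSEQ_offset[where k=j])
  have lim: "(\<lambda>p. (fact j * real (p + j choose j) * T p / T (p + 2 * j)) / fact j) \<longlonglongrightarrow> 1 / fact j"
    by (rule tendsto_divide[OF H tendsto_const]) simp
  have eqf: "(\<lambda>p. (fact j * real (p + j choose j) * T p / T (p + 2 * j)) / fact j)
      = (\<lambda>p. real (p + j choose j) * T (p + j - j) / T (p + j + j))"
  proof (rule ext)
    fix p
    have e: "p + j + j = p + 2 * j" by simp
    show "(fact j * real (p + j choose j) * T p / T (p + 2 * j)) / fact j
      = real (p + j choose j) * T (p + j - j) / T (p + j + j)" unfolding e by simp
  qed
  show "(\<lambda>p. real (p + j choose j) * T (p + j - j) / T (p + j + j)) \<longlonglongrightarrow> 1 / fact j"
    using lim unfolding eqf .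
qed

lemma Jlim:
  assumes "j \<le> k"
  shows "(\<lambda>m. real (m choose j) * T (m - j) / T (m + k)) \<longlonglongrightarrow> (if j = k then 1 / fact k else 0)"
proof (cases "j = k")
  case True thus ?thesis using Glim[of k] by simp
next
  case False
  hence jk: "j < k" using assms by simp
  have up: "(\<lambda>m. (real (m choose j) * T (m - j) / T (m + j)) * (T (m + j) / T (Suc (m + j)))) \<longlonglongrightarrow> 1 / fact j * 0"
    by (rule tendsto_mult[OF Glim]) (use LIMSEQ_ignore_initial_segment[OF L1, of j] in simp)
  have "(\<lambda>m. real (m choose j) * T (m - j) / T (m + k)) \<longlonglongrightarrow> 0"
  proof (rule tendsto_sandwich[OF _ _ tendsto_const])
    show "\<forall>\<^sub>F m in sequentially. 0 \<le> real (m choose j) * T (m - j) / T (m + k)"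
    proof (intro always_eventually allI)
      fix m
      have "0 \<le> real (m choose j) * T (m - j)" using T_pos[of "m - j"] by simp
      thus "0 \<le> real (m choose j) * T (m - j) / T (m + k)" using T_pos[of "m + k"] by simp
    qed
    show "(\<lambda>m. (real (m choose j) * T (m - j) / T (m + j)) * (T (m + j) / T (Suc (m + j)))) \<longlonglongrightarrow> 0"
      using up by simp
    show "\<forall>\<^sub>F m in sequentially. real (m choose j) * T (m - j) / T (m + k)
        \<le> (real (m choose j) * T (m - j) / T (m + j)) * (T (m + j) / T (Suc (m + j)))"
    proof (rule always_eventually, rule allI)
      fix m
      have p: "0 < T (m + j)" "0 < T (Suc (m + j))" "0 \<le> real (m choose j) * T (m - j)"
        using T_pos[of "m + j"] T_pos[of "Suc (m + j)"] T_pos[of "m - j"] by simp_all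
      have "T (Suc (m + j)) \<le> T (m + k)" using jk by (intro T_mono) simp
      hence "real (m choose j) * T (m - j) / T (m + k) \<le> real (m choose j) * T (m - j) / T (Suc (m + j))"
        using p by (intro divide_left_mono) auto
      also have "\<dots> = (real (m choose j) * T (m - j) / T (m + j)) * (T (m + j) / T (Suc (m + j)))"
        using p by simp
      finally show "real (m choose j) * T (m - j) / T (m + k)
        \<le> (real (m choose j) * T (m - j) / T (m + j)) * (T (m + j) / T (Suc (m + j)))" .
    qed
  qed
  thus ?thesis using False by simp
qed



lemma shape_lim:
  assumes S: "shape F" and k: "card F = k"
  shows "(\<lambda>m. real (Ecnt F m) / T (m + k)) \<longlonglongrightarrow> real (Dcnt F k) / fact k"
proof -
  have ev: "\<forall>\<^sub>F m in sequentially. (\<Sum>j\<le>k. real (Dcnt F j) * (real (m choose j) * T (m - j) / T (m + k)))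
      = real (Ecnt F m) / T (m + k)"
    using eventually_ge_at_top[of k]
  proof (rule eventually_mono)
    fix m assume km: "k \<le> m"
    have "Ecnt F m = (\<Sum>j\<le>m. (m choose j) * Dcnt F j * tt (m - j))"
      by (rule main_identity[OF S])
    also have "\<dots> = (\<Sum>j\<le>k. (m choose j) * Dcnt F j * tt (m - j))"
      by (rule sum.mono_neutral_right) (use km Dcnt_big[OF S] k in auto)
    finally have "real (Ecnt F m) = (\<Sum>j\<le>k. real (m choose j) * real (Dcnt F j) * T (m - j))"
      by (simp add: T_def)
    thus "(\<Sum>j\<le>k. real (Dcnt F j) * (real (m choose j) * T (m - j) / T (m + k))) = real (Ecnt F m) / T (m + k)"
      by (simp add: sum_divide_distrib algebra_simps)
  qed
  have "(\<lambda>m. \<Sum>j\<le>k. real (Dcnt F j) * (real (m choose j) * T (m - j) / T (m + k)))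
      \<longlonglongrightarrow> (\<Sum>j\<le>k. real (Dcnt F j) * (if j = k then 1 / fact k else 0))"
    by (intro tendsto_sum tendsto_mult tendsto_const Jlim) simp
  also have "(\<Sum>j\<le>k. real (Dcnt F j) * (if j = k then 1 / fact k else 0)) = real (Dcnt F k) / fact k"
    by (simp add: if_distrib cong: if_cong)
  finally show ?thesis using ev by (rule Lim_transform_eventually)
qed

definition Fset :: "(nat \<times> nat) set \<Rightarrow> (nat \<times> nat) list set" where
  "Fset F = {cs. vf {} cs \<and> set cs = F}"

definition Bset :: "nat \<Rightarrow> (nat \<times> nat) set \<Rightarrow> (nat \<times> nat) list set" where
  "Bset n F = {cs. length cs = n \<and> vf {} cs \<and> set (take (card F) cs) = F}"

lemma Fset_length: "cs \<in> Fset F \<Longrightarrow> length cs = card F"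
  unfolding Fset_def using vf_distinct distinct_card by fastforce

lemma Fset_Dset: assumes S: "shape F" shows "Fset F = Dset F (card F)"
proof (intro equalityI subsetI)
  fix cs assume cs: "cs \<in> Fset F"
  have "length cs = card F" using Fset_length[OF cs] .
  thus "cs \<in> Dset F (card F)" using cs by (auto simp: Fset_def Dset_def shape_empty)
next
  fix cs assume cs: "cs \<in> Dset F (card F)"
  have d: "distinct cs" "set cs \<subseteq> F" "length cs = card F" using cs vf_distinct by (auto simp: Dset_def)
  have "card (set cs) = card F" using d distinct_card by metis
  hence "set cs = F" using d(2) card_subset_eq shape_finite[OF S] by blast
  thus "cs \<in> Fset F" using cs by (auto simp: Fset_def Dset_def)
qed

lemma card_Bset:
  assumes S: "shape F" and kn: "card F \<le> n"
  shows "card (Bset n F) = card (Fset F) * Ecnt F (n - card F)"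
proof -
  let ?k = "card F"
  have eq: "Bset n F = (\<lambda>(xs,ys). xs @ ys) ` (Fset F \<times> Eset F (n - ?k))"
  proof (intro equalityI subsetI)
    fix cs assume cs: "cs \<in> Bset n F"
    have c: "length cs = n" "vf {} cs" "set (take ?k cs) = F" using cs by (auto simp: Bset_def)
    have v: "vf {} (take ?k cs)" "vf (set (take ?k cs)) (drop ?k cs)"
      using c(2) vf_append[of "{}" "take ?k cs" "drop ?k cs"] by auto
    have "take ?k cs \<in> Fset F" using v c by (simp add: Fset_def)
    moreover have "drop ?k cs \<in> Eset F (n - ?k)" using v c by (simp add: Eset_def)
    ultimately show "cs \<in> (\<lambda>(xs,ys). xs @ ys) ` (Fset F \<times> Eset F (n - ?k))"
      by (metis (no_types, lifting) append_take_drop_id case_prod_conv image_eqI mem_Sigma_iff)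
  next
    fix cs assume "cs \<in> (\<lambda>(xs,ys). xs @ ys) ` (Fset F \<times> Eset F (n - ?k))"
    then obtain xs ys where cs: "cs = xs @ ys" and xs: "xs \<in> Fset F" and ys: "ys \<in> Eset F (n - ?k)" by auto
    have lx: "length xs = ?k" by (rule Fset_length[OF xs])
    have "vf {} cs" using xs ys cs vf_append by (auto simp: Fset_def Eset_def)
    thus "cs \<in> Bset n F" using lx cs xs ys kn by (auto simp: Bset_def Fset_def Eset_def)
  qed
  have inj: "inj_on (\<lambda>(xs,ys). xs @ ys) (Fset F \<times> Eset F (n - ?k))"
    by (auto simp: inj_on_def dest!: Fset_length)
  show ?thesis unfolding eq card_image[OF inj] card_cartesian_product Ecnt_def ..
qed

lemma B_lim:
  assumes S: "shape F"
  shows "(\<lambda>n. real (card (Bset n F)) / T n) \<longlonglongrightarrow> real (card (Fset F))^2 / fact (card F)"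
proof (rule LIMSEQ_offset[where k="card F"])
  let ?k = "card F"
  have "(\<lambda>m. real (card (Fset F)) * (real (Ecnt F m) / T (m + ?k))) \<longlonglongrightarrow> real (card (Fset F)) * (real (Dcnt F ?k) / fact ?k)"
    by (intro tendsto_mult tendsto_const shape_lim[OF S]) simp
  moreover have "real (card (Fset F)) * (real (Dcnt F ?k) / fact ?k) = real (card (Fset F))^2 / fact ?k"
    using Fset_Dset[OF S] by (simp add: Dcnt_def power2_eq_square)
  moreover have "(\<lambda>m. real (card (Fset F)) * (real (Ecnt F m) / T (m + ?k))) = (\<lambda>m. real (card (Bset (m + ?k) F)) / T (m + ?k))"
  proof (rule ext)
    fix m
    have "card (Bset (m + ?k) F) = card (Fset F) * Ecnt F m" using card_Bset[OF S, of "m + ?k"] by simp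
    thus "real (card (Fset F)) * (real (Ecnt F m) / T (m + ?k)) = real (card (Bset (m + ?k) F)) / T (m + ?k)"
      by simp
  qed
  ultimately show "(\<lambda>m. real (card (Bset (m + ?k) F)) / T (m + ?k)) \<longlonglongrightarrow> real (card (Fset F))^2 / fact ?k"
    by metis
qed



lemma card_ferrers: "card (ferrers lam) = sum_list lam"
proof -
  have "ferrers lam = (SIGMA i:{..<length lam}. {..<lam ! i})" by (auto simp: ferrers_def)
  hence "card (ferrers lam) = (\<Sum>i<length lam. lam ! i)" by (simp add: card_SigmaI)
  thus ?thesis by (simp add: sum_list_sum_nth atLeast0LessThan)
qed

lemma partition_shape: assumes "is_partition lam" shows "shape (ferrers lam)"
proof -
  have f: "finite (ferrers lam)"
  proof -
    have "ferrers lam = (SIGMA i:{..<length lam}. {..<lam ! i})" by (auto simp: ferrers_def)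
    thus ?thesis by simp
  qed
  have s: "sorted_wrt (\<ge>) lam" using assms by (simp add: is_partition_def)
  have "downclosed (ferrers lam)"
    unfolding downclosed_def
  proof (intro allI impI)
    fix i j i' j' assume ij: "(i,j) \<in> ferrers lam" and le: "i' \<le> i" "j' \<le> j"
    have "lam ! i \<le> lam ! i'"
    proof (cases "i' = i")
      case False thus ?thesis using s ij le by (auto simp: sorted_wrt_iff_nth_less ferrers_def)
    qed simp
    thus "(i',j') \<in> ferrers lam" using ij le by (auto simp: ferrers_def)
  qed
  thus ?thesis using f by (simp add: shape_def)
qed

lemma shape_partition: assumes S: "shape S" shows "\<exists>lam. is_partition lam \<and> S = ferrers lam"
proof -
  let ?C = "{i. (i,0) \<in> S}"
  define R where "R = card ?C"
  have fC: "finite ?C"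
  proof -
    have "?C \<subseteq> fst ` S" by force
    thus ?thesis using shape_finite[OF S] finite_subset by blast
  qed
  have C: "?C = {..<R}" unfolding R_def
    by (rule initseg[OF fC]) (use shapeD[OF S] in auto)
  define lam where "lam = map (rl S) [0..<R]"
  have "sorted_wrt (\<ge>) lam"
    unfolding lam_def sorted_wrt_iff_nth_less using rl_mono[OF S] by auto
  moreover have "\<forall>x\<in>set lam. 0 < x"
  proof
    fix x assume "x \<in> set lam"
    then obtain i where "i < R" "x = rl S i" unfolding lam_def by auto
    moreover hence "(i,0) \<in> S" using C by auto
    ultimately show "0 < x" using mem_rl[OF S] by simp
  qed
  ultimately have p: "is_partition lam" by (simp add: is_partition_def)
  have "S = ferrers lam"
  proof (intro equalityI subsetI)
    fix c assume c: "c \<in> S"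
    obtain i j where cij: "c = (i,j)" by (cases c)
    have "(i,0) \<in> S" using shapeD[OF S, of i j i 0] c cij by simp
    hence "i < R" using C by auto
    thus "c \<in> ferrers lam" using c cij mem_rl[OF S] by (auto simp: ferrers_def lam_def)
  next
    fix c assume c: "c \<in> ferrers lam"
    obtain i j where cij: "c = (i,j)" by (cases c)
    thus "c \<in> S" using c mem_rl[OF S] by (auto simp: ferrers_def lam_def)
  qed
  thus ?thesis using p by blast
qed

lemma shape_iff_partition: "shape S \<longleftrightarrow> (\<exists>lam. is_partition lam \<and> S = ferrers lam)"
  using shape_partition partition_shape by blast

definition tab :: "(nat \<times> nat) list \<Rightarrow> (nat \<times> nat \<rightharpoonup> nat)" where
  "tab cs = map_of (zip cs [1..<Suc (length cs)])"

lemma tab_nth: "distinct cs \<Longrightarrow> i < length cs \<Longrightarrow> tab cs (cs ! i) = Some (Suc i)"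
  unfolding tab_def by (subst map_of_zip_nth) (auto simp del: upt_Suc)

lemma dom_tab: "dom (tab cs) = set cs"
  unfolding tab_def by (simp add: dom_map_of_zip del: upt_Suc)

lemma ran_tab: "distinct cs \<Longrightarrow> ran (tab cs) = {1..length cs}"
  unfolding tab_def by (subst ran_map_of_zip) (auto simp del: upt_Suc)

lemma tab_None: "c \<notin> set cs \<Longrightarrow> tab cs c = None"
  using dom_tab by blast

lemma tab_inj: assumes "distinct cs" "distinct ds" "tab cs = tab ds" shows "cs = ds"
proof -
  have l: "length cs = length ds"
  proof -
    have "{1..length cs} = {1..length ds}" using ran_tab[OF assms(1)] ran_tab[OF assms(2)] assms(3) by metis
    hence "card {1..length cs} = card {1..length ds}" by (rule arg_cong)
    thus ?thesis by (simp only: card_atLeastAtMost)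
  qed
  show ?thesis
  proof (rule nth_equalityI[OF l])
    fix i assume i: "i < length cs"
    have "tab ds (cs ! i) = Some (Suc i)" using tab_nth[OF assms(1) i] assms(3) by simp
    hence "cs ! i \<in> set ds" using dom_tab by (metis domI)
    then obtain q where q: "q < length ds" "ds ! q = cs ! i" by (auto simp: in_set_conv_nth)
    have "tab ds (ds ! q) = Some (Suc q)" by (rule tab_nth[OF assms(2) q(1)])
    hence "q = i" using q \<open>tab ds (cs ! i) = Some (Suc i)\<close> by simp
    thus "cs ! i = ds ! i" using q by simp
  qed
qed

lemma dom_subtableau_tab: assumes d: "distinct cs" shows "dom (subtableau k (tab cs)) = set (take k cs)"
proof (intro equalityI subsetI)
  fix c assume "c \<in> dom (subtableau k (tab cs))"
  then obtain v where v: "tab cs c = Some v" "v \<le> k"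
    by (auto simp: subtableau_def split: option.splits if_splits)
  hence "c \<in> set cs" using dom_tab by blast
  then obtain i where i: "i < length cs" "cs ! i = c" by (auto simp: in_set_conv_nth)
  have "v = Suc i" using tab_nth[OF d i(1)] i v by simp
  thus "c \<in> set (take k cs)" using i v by (auto simp: in_set_conv_nth intro!: exI[of _ i])
next
  fix c assume "c \<in> set (take k cs)"
  then obtain i where i: "i < length cs" "i < k" "cs ! i = c" by (auto simp: in_set_conv_nth)
  have "tab cs c = Some (Suc i)" using tab_nth[OF d i(1)] i by simp
  thus "c \<in> dom (subtableau k (tab cs))" using i by (auto simp: subtableau_def)
qed



lemma prefix_shape: assumes "vf {} cs" shows "shape (set (take k cs))"
proof -
  have "vf {} (take k cs @ drop k cs)" using assms by simp
  hence "vf {} (take k cs)" using vf_append by blast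
  from vf_shape[OF this shape_empty] show ?thesis by simp
qed

lemma vf_intro:
  "distinct cs \<Longrightarrow> set cs \<inter> A = {} \<Longrightarrow> (\<forall>k. 0 < k \<longrightarrow> k \<le> length cs \<longrightarrow> shape (A \<union> set (take k cs))) \<Longrightarrow> vf A cs"
proof (induction cs arbitrary: A)
  case (Cons c cs)
  have s1: "shape (insert c A)" using Cons.prems(3)[rule_format, of 1] by simp
  have "vf (insert c A) cs"
  proof (rule Cons.IH)
    show "distinct cs" "set cs \<inter> insert c A = {}" using Cons.prems by auto
    show "\<forall>k. 0 < k \<longrightarrow> k \<le> length cs \<longrightarrow> shape (insert c A \<union> set (take k cs))"
    proof (intro allI impI)
      fix k assume "0 < k" "k \<le> length cs"
      hence "shape (A \<union> set (take (Suc k) (c # cs)))" using Cons.prems(3)[rule_format, of "Suc k"] by simp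
      thus "shape (insert c A \<union> set (take k cs))" by simp
    qed
  qed
  thus ?case using s1 Cons.prems by simp
qed simp

lemma before:
  assumes v: "vf {} cs" and p: "p < length cs" and le: "a' \<le> a" "b' \<le> b" and cp: "cs ! p = (a,b)"
    and ne: "(a',b') \<noteq> (a,b)"
  shows "\<exists>q<p. cs ! q = (a',b')"
proof -
  have sh: "shape (set (take (Suc p) cs))" by (rule prefix_shape[OF v])
  have "(a,b) \<in> set (take (Suc p) cs)" using p cp by (auto simp: in_set_conv_nth intro!: exI[of _ p])
  hence "(a',b') \<in> set (take (Suc p) cs)" using shapeD[OF sh _ le] by simp
  then obtain q where q: "q < length (take (Suc p) cs)" "take (Suc p) cs ! q = (a',b')"
    by (auto simp: in_set_conv_nth)
  hence "q < Suc p" "cs ! q = (a',b')" by auto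
  moreover have "q \<noteq> p" using ne cp \<open>cs ! q = (a',b')\<close> by auto
  ultimately show ?thesis by (intro exI[of _ q]) auto
qed

lemma tab_SYT: assumes v: "vf {} cs" shows "is_SYT (length cs) (tab cs)"
proof -
  have d: "distinct cs" using vf_distinct[OF v] by simp
  have sh: "shape (set cs)" using prefix_shape[OF v, of "length cs"] by simp
  have val: "the (tab cs (cs ! i)) = Suc i" if "i < length cs" for i using tab_nth[OF d that] by simp
  have row: "the (tab cs (i, j)) < the (tab cs (i, Suc j))" if h: "(i, Suc j) \<in> dom (tab cs)" for i j
  proof -
    obtain p where p: "p < length cs" "cs ! p = (i, Suc j)" using h dom_tab by (auto simp: in_set_conv_nth)
    obtain q where q: "q < p" "cs ! q = (i, j)" using before[OF v p(1) _ _ p(2), of i j] by auto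
    show ?thesis using val[OF p(1)] val[of q] q p by simp
  qed
  have col: "the (tab cs (i, j)) < the (tab cs (Suc i, j))" if h: "(Suc i, j) \<in> dom (tab cs)" for i j
  proof -
    obtain p where p: "p < length cs" "cs ! p = (Suc i, j)" using h dom_tab by (auto simp: in_set_conv_nth)
    obtain q where q: "q < p" "cs ! q = (i, j)" using before[OF v p(1) _ _ p(2), of i j] by auto
    show ?thesis using val[OF p(1)] val[of q] q p by simp
  qed
  have inj: "inj_on (tab cs) (dom (tab cs))"
  proof (rule inj_onI)
    fix x y assume x: "x \<in> dom (tab cs)" and y: "y \<in> dom (tab cs)" and e: "tab cs x = tab cs y"
    obtain i where i: "i < length cs" "cs ! i = x" using x dom_tab by (auto simp: in_set_conv_nth)
    obtain j where j: "j < length cs" "cs ! j = y" using y dom_tab by (auto simp: in_set_conv_nth)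
    show "x = y" using tab_nth[OF d i(1)] tab_nth[OF d j(1)] e i j by simp
  qed
  show ?thesis unfolding is_SYT_def
    using shape_partition[OF sh] dom_tab[of cs] inj ran_tab[OF d] row col by auto
qed

lemma SYT_shape: "is_SYT n U \<Longrightarrow> shape (dom U)"
  unfolding is_SYT_def using partition_shape by auto

lemma SYT_row_mono:
  assumes U: "is_SYT n U" shows "(i, j + d) \<in> dom U \<Longrightarrow> the (U (i,j)) \<le> the (U (i, j + d))"
proof (induction d)
  case (Suc d)
  have "(i, j + d) \<in> dom U" using shapeD[OF SYT_shape[OF U] Suc.prems, of i "j + d"] by simp
  moreover have "the (U (i, j + d)) < the (U (i, Suc (j + d)))"
    using U Suc.prems unfolding is_SYT_def by simp
  ultimately show ?case using Suc.IH by simp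
qed simp

lemma SYT_col_mono:
  assumes U: "is_SYT n U" shows "(i + d, j) \<in> dom U \<Longrightarrow> the (U (i,j)) \<le> the (U (i + d, j))"
proof (induction d)
  case (Suc d)
  have "(i + d, j) \<in> dom U" using shapeD[OF SYT_shape[OF U] Suc.prems, of "i + d" j] by simp
  moreover have "the (U (i + d, j)) < the (U (Suc (i + d), j))"
    using U Suc.prems unfolding is_SYT_def by simp
  ultimately show ?case using Suc.IH by simp
qed simp

lemma SYT_mono:
  assumes U: "is_SYT n U" and ab: "(a,b) \<in> dom U" and le: "a' \<le> a" "b' \<le> b"
  shows "the (U (a',b')) \<le> the (U (a,b))"
proof -
  have a'b: "(a', b) \<in> dom U" using shapeD[OF SYT_shape[OF U] ab le(1), of b] by simp
  have "the (U (a',b')) \<le> the (U (a', b' + (b - b')))"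
    using SYT_row_mono[OF U, of a' b' "b - b'"] a'b le by simp
  also have "\<dots> = the (U (a', b))" using le by simp
  also have "\<dots> \<le> the (U (a' + (a - a'), b))"
    using SYT_col_mono[OF U, of a' "a - a'" b] ab le by simp
  also have "\<dots> = the (U (a, b))" using le by simp
  finally show ?thesis .
qed

lemma SYT_tab:
  assumes U: "is_SYT n U" shows "\<exists>cs. vf {} cs \<and> length cs = n \<and> U = tab cs"
proof -
  have sh: "shape (dom U)" by (rule SYT_shape[OF U])
  have ran: "ran U = {1..n}" and inj: "inj_on U (dom U)" using U by (auto simp: is_SYT_def)
  have ex: "\<exists>c. U c = Some v" if "v \<in> {1..n}" for v
  proof -
    have "v \<in> ran U" using that ran by simp
    thus ?thesis unfolding ran_def by blast
  qed
  have uniq: "c = c'" if "U c = Some v" "U c' = Some v" for c c' v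
  proof -
    have "c \<in> dom U" "c' \<in> dom U" "U c = U c'" using that by auto
    thus ?thesis using inj_onD[OF inj] by blast
  qed
  define cell where "cell v = (THE c. U c = Some v)" for v
  have cellp: "U (cell v) = Some v" if "v \<in> {1..n}" for v
    unfolding cell_def by (rule theI') (use ex[OF that] uniq in blast)
  define cs where "cs = map cell [1..<Suc n]"
  have len: "length cs = n" by (simp add: cs_def)
  have nth: "cs ! i = cell (Suc i)" if "i < n" for i using that by (simp add: cs_def nth_upt del: upt_Suc)
  have Unth: "U (cs ! i) = Some (Suc i)" if "i < n" for i using nth[OF that] cellp[of "Suc i"] that by simp
  have dist: "distinct cs"
  proof (subst distinct_conv_nth, intro allI impI)
    fix i j assume "i < length cs" "j < length cs" "i \<noteq> j"
    thus "cs ! i \<noteq> cs ! j" using Unth[of i] Unth[of j] len by auto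
  qed
  have setcs: "set cs \<subseteq> dom U"
  proof
    fix c assume "c \<in> set cs"
    then obtain i where "i < n" "cs ! i = c" using len by (auto simp: in_set_conv_nth)
    thus "c \<in> dom U" using Unth[of i] by auto
  qed
  have tabeq: "U = tab cs"
  proof (rule ext)
    fix c show "U c = tab cs c"
    proof (cases "c \<in> dom U")
      case True
      then obtain v where v: "U c = Some v" by auto
      hence vr: "v \<in> {1..n}" using ran ranI[of U c v] by simp
      hence "v - 1 < n" "Suc (v - 1) = v" by auto
      hence "U (cs ! (v - 1)) = Some v" using Unth[of "v - 1"] by simp
      hence "c = cs ! (v - 1)" using uniq[OF v] by blast
      thus ?thesis using tab_nth[OF dist, of "v - 1"] vr v len by auto
    next
      case False
      hence "c \<notin> set cs" using setcs by auto
      thus ?thesis using False tab_None by auto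
    qed
  qed
  have pre: "set (take k cs) = {c \<in> dom U. the (U c) \<le> k}" if k: "k \<le> n" for k
  proof (intro equalityI subsetI)
    fix c assume "c \<in> set (take k cs)"
    then obtain i where "i < k" "cs ! i = c" using len k by (auto simp: in_set_conv_nth)
    thus "c \<in> {c \<in> dom U. the (U c) \<le> k}" using Unth[of i] k by auto
  next
    fix c assume c: "c \<in> {c \<in> dom U. the (U c) \<le> k}"
    then obtain v where v: "U c = Some v" "v \<le> k" by auto
    hence vr: "v \<in> {1..n}" using ran ranI[of U c v] by simp
    hence "v - 1 < n" "Suc (v - 1) = v" by auto
      hence "U (cs ! (v - 1)) = Some v" using Unth[of "v - 1"] by simp
    hence "c = cs ! (v - 1)" using uniq[OF v(1)] by blast
    thus "c \<in> set (take k cs)" using vr v len k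
      by (auto simp: in_set_conv_nth intro!: exI[of _ "v - 1"])
  qed
  have "vf {} cs"
  proof (rule vf_intro[OF dist])
    show "\<forall>k. 0 < k \<longrightarrow> k \<le> length cs \<longrightarrow> shape ({} \<union> set (take k cs))"
    proof (intro allI impI)
      fix k assume "0 < k" "k \<le> length cs"
      hence P: "set (take k cs) = {c \<in> dom U. the (U c) \<le> k}" using pre len by simp
      have "finite {c \<in> dom U. the (U c) \<le> k}" using shape_finite[OF sh] by simp
      moreover have "downclosed {c \<in> dom U. the (U c) \<le> k}"
        unfolding downclosed_def
      proof (intro allI impI)
        fix i j i' j' assume ij: "(i,j) \<in> {c \<in> dom U. the (U c) \<le> k}" and le: "i' \<le> i" "j' \<le> j"
        have "(i',j') \<in> dom U" using shapeD[OF sh _ le] ij by simp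
        moreover have "the (U (i',j')) \<le> the (U (i,j))" using SYT_mono[OF U _ le] ij by simp
        ultimately show "(i',j') \<in> {c \<in> dom U. the (U c) \<le> k}" using ij by simp
      qed
      ultimately show "shape ({} \<union> set (take k cs))" unfolding P by (simp add: shape_def)
    qed
  qed simp
  thus ?thesis using len tabeq by blast
qed



lemma card_SYT_P:
  "card {U. is_SYT n U \<and> P U} = card {cs. length cs = n \<and> vf {} cs \<and> P (tab cs)}"
proof -
  have eq: "{U. is_SYT n U \<and> P U} = tab ` {cs. length cs = n \<and> vf {} cs \<and> P (tab cs)}"
  proof (intro equalityI subsetI)
    fix U assume "U \<in> {U. is_SYT n U \<and> P U}"
    hence U: "is_SYT n U" "P U" by auto
    obtain cs where "vf {} cs" "length cs = n" "U = tab cs" using SYT_tab[OF U(1)] by blast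
    thus "U \<in> tab ` {cs. length cs = n \<and> vf {} cs \<and> P (tab cs)}" using U(2) by auto
  next
    fix U assume "U \<in> tab ` {cs. length cs = n \<and> vf {} cs \<and> P (tab cs)}"
    then obtain cs where "U = tab cs" "length cs = n" "vf {} cs" "P (tab cs)" by auto
    thus "U \<in> {U. is_SYT n U \<and> P U}" using tab_SYT by auto
  qed
  have inj: "inj_on tab {cs. length cs = n \<and> vf {} cs \<and> P (tab cs)}"
    by (rule inj_onI) (use tab_inj vf_distinct in auto)
  show ?thesis unfolding eq by (rule card_image[OF inj])
qed

lemma num_SYT_tt: "num_SYT n = tt n"
proof -
  have "num_SYT n = card {U. is_SYT n U \<and> True}" by (simp add: num_SYT_def)
  also have "\<dots> = card {cs. length cs = n \<and> vf {} cs \<and> True}" by (rule card_SYT_P)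
  finally show ?thesis by (simp add: tt_def Ecnt_def Eset_def)
qed

lemma num_SYT_shape_Fset:
  "num_SYT_shape lam = card (Fset (ferrers lam))"
proof -
  have "num_SYT_shape lam = card {cs. length cs = sum_list lam \<and> vf {} cs \<and> dom (tab cs) = ferrers lam}"
    unfolding num_SYT_shape_def by (rule card_SYT_P)
  also have "{cs. length cs = sum_list lam \<and> vf {} cs \<and> dom (tab cs) = ferrers lam} = Fset (ferrers lam)"
    using Fset_length card_ferrers by (auto simp: dom_tab Fset_def)
  finally show ?thesis .
qed

lemma N_avoid_union:
  "N_avoid n L = card {cs. length cs = n \<and> vf {} cs \<and> (\<exists>lam\<in>set L. cs \<in> Bset n (ferrers lam))}"
proof -
  have "N_avoid n L = card {cs. length cs = n \<and> vf {} cs \<and>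
      (\<exists>k\<le>n. \<exists>lam\<in>set L. dom (subtableau k (tab cs)) = ferrers lam)}"
    unfolding N_avoid_def by (rule card_SYT_P)
  also have "{cs. length cs = n \<and> vf {} cs \<and> (\<exists>k\<le>n. \<exists>lam\<in>set L. dom (subtableau k (tab cs)) = ferrers lam)}
      = {cs. length cs = n \<and> vf {} cs \<and> (\<exists>lam\<in>set L. cs \<in> Bset n (ferrers lam))}"
  proof (intro Collect_cong conj_cong refl)
    fix cs assume l: "length cs = n" and v: "vf {} cs"
    have d: "distinct cs" using vf_distinct[OF v] by simp
    have ct: "card (set (take k cs)) = min k n" for k
      using distinct_card[OF distinct_take[OF d]] l by simp
    show "(\<exists>k\<le>n. \<exists>lam\<in>set L. dom (subtableau k (tab cs)) = ferrers lam)
        = (\<exists>lam\<in>set L. cs \<in> Bset n (ferrers lam))"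
    proof
      assume "\<exists>k\<le>n. \<exists>lam\<in>set L. dom (subtableau k (tab cs)) = ferrers lam"
      then obtain k lam where k: "k \<le> n" "lam \<in> set L" "set (take k cs) = ferrers lam"
        using dom_subtableau_tab[OF d] by auto
      have "card (ferrers lam) = k" using ct[of k] k by simp
      thus "\<exists>lam\<in>set L. cs \<in> Bset n (ferrers lam)" using k l v by (auto simp: Bset_def)
    next
      assume "\<exists>lam\<in>set L. cs \<in> Bset n (ferrers lam)"
      then obtain lam where lam: "lam \<in> set L" "set (take (card (ferrers lam)) cs) = ferrers lam"
        by (auto simp: Bset_def)
      have "card (ferrers lam) \<le> n"
        using ct[of "card (ferrers lam)"] lam(2) by (metis min_def nat_le_linear)
      thus "\<exists>k\<le>n. \<exists>lam\<in>set L. dom (subtableau k (tab cs)) = ferrers lam"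
        using lam dom_subtableau_tab[OF d] by auto
    qed
  qed
  finally show ?thesis .
qed

theorem corollary2:
  fixes L :: "nat list list"
  assumes "\<forall>lam\<in>set L. is_partition lam"
    and "\<forall>i<length L. \<forall>j<length L. i \<noteq> j \<longrightarrow> \<not> subshape (L ! i) (L ! j)"
  shows "(\<lambda>n. real (N_avoid n L) / real (num_SYT n))
           \<longlonglongrightarrow> (\<Sum>lam\<leftarrow>L. real (num_SYT_shape lam) ^ 2 / fact (sum_list lam))"
proof -
  have distL: "distinct L"
  proof (subst distinct_conv_nth, intro allI impI)
    fix i j assume ij: "i < length L" "j < length L" "i \<noteq> j"
    hence "\<not> subshape (L ! i) (L ! j)" using assms(2) by blast
    thus "L ! i \<noteq> L ! j" by (auto simp: subshape_def)
  qed
  have sh: "shape (ferrers lam)" if "lam \<in> set L" for lam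
    using partition_shape assms(1) that by blast
  have disj: "Bset n (ferrers lam1) \<inter> Bset n (ferrers lam2) = {}"
    if l1: "lam1 \<in> set L" and l2: "lam2 \<in> set L" and ne: "lam1 \<noteq> lam2" for n lam1 lam2
  proof (rule ccontr)
    assume "Bset n (ferrers lam1) \<inter> Bset n (ferrers lam2) \<noteq> {}"
    then obtain cs where c1: "set (take (card (ferrers lam1)) cs) = ferrers lam1"
      and c2: "set (take (card (ferrers lam2)) cs) = ferrers lam2" by (auto simp: Bset_def)
    obtain i where i: "i < length L" "L ! i = lam1" using l1 by (auto simp: in_set_conv_nth)
    obtain j where j: "j < length L" "L ! j = lam2" using l2 by (auto simp: in_set_conv_nth)
    have ij: "i \<noteq> j" using i j ne by auto
    show False
    proof (cases "card (ferrers lam1) \<le> card (ferrers lam2)")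
      case True
      hence "ferrers lam1 \<subseteq> ferrers lam2" using c1 c2 set_take_subset_set_take by metis
      thus False using assms(2) i j ij by (auto simp: subshape_def)
    next
      case False
      hence "ferrers lam2 \<subseteq> ferrers lam1" using c1 c2 set_take_subset_set_take
        by (metis nat_le_linear)
      thus False using assms(2) i j ij by (auto simp: subshape_def)
    qed
  qed
  have Neq: "N_avoid n L = (\<Sum>lam\<in>set L. card (Bset n (ferrers lam)))" for n
  proof -
    have "{cs. length cs = n \<and> vf {} cs \<and> (\<exists>lam\<in>set L. cs \<in> Bset n (ferrers lam))}
        = (\<Union>lam\<in>set L. Bset n (ferrers lam))" by (auto simp: Bset_def)
    hence "N_avoid n L = card (\<Union>lam\<in>set L. Bset n (ferrers lam))" using N_avoid_union by simp
    also have "\<dots> = (\<Sum>lam\<in>set L. card (Bset n (ferrers lam)))"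
    proof (rule card_UN_disjoint)
      show "\<forall>lam\<in>set L. finite (Bset n (ferrers lam))"
      proof
        fix lam assume "lam \<in> set L"
        have "Bset n (ferrers lam) \<subseteq> Eset {} n" by (auto simp: Bset_def Eset_def)
        thus "finite (Bset n (ferrers lam))" using finite_Eset[OF shape_empty] finite_subset by blast
      qed
    qed (use disj in auto)
    finally show ?thesis .
  qed
  have eq: "real (N_avoid n L) / real (num_SYT n) = (\<Sum>lam\<in>set L. real (card (Bset n (ferrers lam))) / T n)" for n
    unfolding Neq num_SYT_tt T_def[symmetric] by (simp add: sum_divide_distrib)
  have "(\<lambda>n. \<Sum>lam\<in>set L. real (card (Bset n (ferrers lam))) / T n)
      \<longlonglongrightarrow> (\<Sum>lam\<in>set L. real (card (Fset (ferrers lam)))^2 / fact (card (ferrers lam)))"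
    by (intro tendsto_sum B_lim sh)
  also have "(\<Sum>lam\<in>set L. real (card (Fset (ferrers lam)))^2 / fact (card (ferrers lam)))
      = (\<Sum>lam\<leftarrow>L. real (num_SYT_shape lam) ^ 2 / fact (sum_list lam))"
    unfolding sum_list_distinct_conv_sum_set[OF distL] num_SYT_shape_Fset card_ferrers ..
  finally show ?thesis unfolding eq .
qed

end
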